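(* For all $a,b\in\mathbb{R}$ with $|a|,|b|\le2$, \[ (1+\cos a)(1+\cos b)\ge 2+2\cos\big(\sqrt{a^2+b^2}\big), \] with equality only for $a=0$ or $b=0$. *)

theory Defs
  imports Complex_Main
begin

end

theory Submission
  imports Defs "HOL-Analysis.Analysis"
begin

lemma sin_lt_self: fixes z :: real assumes "0 < z" shows "sin z < z"
proof (cases "z \<le> 1")
  case True
  have "(\<lambda>t. t - sin t) 0 < (\<lambda>t. t - sin t) z"
  proof (rule DERIV_pos_imp_increasing_open[OF assms])
    fix t :: real assume t: "0 < t" "t < z"
    have "cos (2 * (t/2)) < 1" by (rule cos_double_less_one) (use t True in auto)
    then have "cos t < 1" by simp
    moreover have "((\<lambda>t. t - sin t) has_real_derivative (1 - cos t)) (at t)"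
      by (auto intro!: derivative_eq_intros)
    ultimately show "\<exists>y. ((\<lambda>t. t - sin t) has_real_derivative y) (at t) \<and> y > 0"
      by auto
  next
    show "continuous_on {0..z} (\<lambda>t. t - sin t)" by (intro continuous_intros)
  qed
  then show ?thesis by simp
next
  case False
  then show ?thesis using sin_le_one[of z] by linarith
qed

lemma tan_ratio_mono:
  fixes u v :: real assumes "0 < u" "u < v" "v < pi/2"
  shows "tan u / u < tan v / v"
proof (rule DERIV_pos_imp_increasing[OF assms(2)])
  fix t assume t: "u \<le> t" "t \<le> v"
  have t0: "0 < t" and tp: "t < pi/2" using t assms by auto
  have c: "0 < cos t" using cos_gt_zero[OF t0 tp] .
  have s: "0 < sin t" using sin_gt_zero2[OF t0 tp] .
  have "sin (2*t) < 2*t" by (rule sin_lt_self) (use t0 in auto)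
  then have sc: "sin t * cos t < t" by (simp add: sin_double)
  have D: "((\<lambda>t. tan t / t) has_real_derivative
      ((inverse ((cos t)\<^sup>2) * t - tan t) / t\<^sup>2)) (at t)"
    using c t0
    by (auto intro!: derivative_eq_intros simp: power2_eq_square field_simps)
  have "inverse ((cos t)\<^sup>2) * t - tan t = (t - sin t * cos t) / (cos t)\<^sup>2"
    using c by (simp add: tan_def field_simps power2_eq_square)
  also have "\<dots> > 0" using sc c by simp
  finally have "(inverse ((cos t)\<^sup>2) * t - tan t) / t\<^sup>2 > 0" using t0 by simp
  with D show "\<exists>y. ((\<lambda>t. tan t / t) has_real_derivative y) (at t) \<and> y > 0" by blast
qed

lemma cos_prod_gt:
  fixes x y :: real assumes x: "0 < x" and y: "0 < y" and r: "x\<^sup>2 + y\<^sup>2 < (pi/2)\<^sup>2"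
  shows "cos (sqrt (x\<^sup>2 + y\<^sup>2)) < cos x * cos y"
proof -
  define G where "G = (\<lambda>t. cos t * cos y / cos (sqrt (t\<^sup>2 + y\<^sup>2)))"
  have Rb: "0 < sqrt (t\<^sup>2 + y\<^sup>2) \<and> sqrt (t\<^sup>2 + y\<^sup>2) < pi/2" if "0 \<le> t" "t \<le> x" for t
  proof -
    have "t\<^sup>2 \<le> x\<^sup>2" using that by (simp add: power_mono)
    then have "t\<^sup>2 + y\<^sup>2 < (pi/2)\<^sup>2" using r by linarith
    then have "sqrt (t\<^sup>2 + y\<^sup>2) < sqrt ((pi/2)\<^sup>2)" by (simp only: real_sqrt_less_iff)
    moreover have "0 < t\<^sup>2 + y\<^sup>2" using y by (simp add: add_nonneg_pos)
    ultimately show ?thesis by simp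
  qed
  have cR: "0 < cos (sqrt (t\<^sup>2 + y\<^sup>2))" if "0 \<le> t" "t \<le> x" for t
    using Rb[OF that] by (intro cos_gt_zero) auto
  have "G 0 < G x"
  proof (rule DERIV_pos_imp_increasing_open[OF x])
    fix t :: real assume t: "0 < t" "t < x"
    define R where "R = sqrt (t\<^sup>2 + y\<^sup>2)"
    have R0: "0 < R" and Rp: "R < pi/2" using Rb[of t] t unfolding R_def by auto
    have cRt: "0 < cos R" unfolding R_def using cR[of t] t by auto
    have "sqrt (t\<^sup>2) < sqrt (t\<^sup>2 + y\<^sup>2)" using y by (simp only: real_sqrt_less_iff) simp
    then have tR: "t < R" unfolding R_def using t by simp
    have tp: "t < pi/2" using tR Rp by linarith
    have ct: "0 < cos t" using cos_gt_zero[OF t(1) tp] .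
    have cy: "0 < cos y" using Rb[of 0] y x by (intro cos_gt_zero) auto
    have "tan t / t < tan R / R" by (rule tan_ratio_mono[OF t(1) tR Rp])
    then have "sin t / (cos t * t) < sin R / (cos R * R)" by (simp add: tan_def)
    then have key: "R * sin t * cos R < t * cos t * sin R"
      using ct cRt t(1) R0 by (simp add: field_simps)
    have D: "(G has_real_derivative
       ((- sin t * cos y) * cos R - cos t * cos y * (- sin R * (t / R))) / (cos R)\<^sup>2) (at t)"
      unfolding G_def R_def
      using cRt R0 unfolding R_def
      by (auto intro!: derivative_eq_intros simp: power2_eq_square) (simp add: divide_inverse mult_ac)
    have "((- sin t * cos y) * cos R - cos t * cos y * (- sin R * (t / R))) / (cos R)\<^sup>2 > 0"
    proof -
      have "(- sin t * cos y) * cos R - cos t * cos y * (- sin R * (t / R))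
          = cos y * (t * cos t * sin R - R * sin t * cos R) / R"
        using R0 by (simp add: field_simps)
      also have "\<dots> > 0" using cy key R0 by simp
      finally show ?thesis using cRt by simp
    qed
    with D show "\<exists>y. (G has_real_derivative y) (at t) \<and> y > 0" by blast
  next
    show "continuous_on {0..x} G" unfolding G_def
      using cR by (intro continuous_intros) (auto simp: less_imp_neq[symmetric] dest: cR)
  qed
  moreover have "G 0 = 1" unfolding G_def using Rb[of 0] y x cos_gt_zero[of y]
    by simp
  moreover have "cos (sqrt (x\<^sup>2 + y\<^sup>2)) > 0" using cR[of x] x by simp
  ultimately show ?thesis unfolding G_def by (simp add: field_simps)
qed

theorem lemma3p3:
  fixes a b :: real
  assumes "\<bar>a\<bar> \<le> 2" and "\<bar>b\<bar> \<le> 2"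
  shows "(1 + cos a) * (1 + cos b) \<ge> 2 + 2 * cos (sqrt (a\<^sup>2 + b\<^sup>2)) \<and>
         ((1 + cos a) * (1 + cos b) = 2 + 2 * cos (sqrt (a\<^sup>2 + b\<^sup>2)) \<longrightarrow> a = 0 \<or> b = 0)"
proof (cases "a = 0 \<or> b = 0")
  case True
  then have "(1 + cos a) * (1 + cos b) = 2 + 2 * cos (sqrt (a\<^sup>2 + b\<^sup>2))"
    by (auto simp: algebra_simps)
  then show ?thesis using True by simp
next
  case False
  define x where "x = \<bar>a\<bar> / 2"
  define y where "y = \<bar>b\<bar> / 2"
  have x0: "0 < x" and y0: "0 < y" using False by (auto simp: x_def y_def)
  have x1: "x \<le> 1" and y1: "y \<le> 1" using assms by (auto simp: x_def y_def)
  have "x\<^sup>2 \<le> 1" "y\<^sup>2 \<le> 1" using x0 y0 x1 y1 by (auto simp: power_le_one)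
  moreover have "(pi/2)\<^sup>2 > (3/2::real)\<^sup>2" using pi_gt3
    by (intro power_strict_mono) auto
  ultimately have r: "x\<^sup>2 + y\<^sup>2 < (pi/2)\<^sup>2" by (simp add: power2_eq_square)
  define R where "R = sqrt (x\<^sup>2 + y\<^sup>2)"
  have lt: "cos R < cos x * cos y" unfolding R_def by (rule cos_prod_gt[OF x0 y0 r])
  have R0: "0 < R" and Rp: "R < pi/2"
  proof -
    have "0 < x\<^sup>2 + y\<^sup>2" using x0 y0 by (simp add: add_pos_pos)
    then show "0 < R" unfolding R_def by simp
    have "sqrt (x\<^sup>2 + y\<^sup>2) < sqrt ((pi/2)\<^sup>2)" using r by (simp only: real_sqrt_less_iff)
    then show "R < pi/2" unfolding R_def by simp
  qed
  have cR: "0 < cos R" using cos_gt_zero[OF R0 Rp] .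
  have sq: "(cos R)\<^sup>2 < (cos x * cos y)\<^sup>2"
    using lt cR by (intro power_strict_mono) auto
  have ca: "cos a = 2 * (cos x)\<^sup>2 - 1"
    proof -
    have "cos a = cos \<bar>a\<bar>" by (cases "a < 0") auto
    also have "\<bar>a\<bar> = 2 * x" unfolding x_def by simp
    finally show ?thesis using cos_double_cos[of x] by simp
  qed
  have cb: "cos b = 2 * (cos y)\<^sup>2 - 1"
    proof -
    have "cos b = cos \<bar>b\<bar>" by (cases "b < 0") auto
    also have "\<bar>b\<bar> = 2 * y" unfolding y_def by simp
    finally show ?thesis using cos_double_cos[of y] by simp
  qed
  have "a\<^sup>2 + b\<^sup>2 = (2 * R)\<^sup>2" unfolding R_def x_def y_def
    by (simp add: power_mult_distrib power_divide)
  then have "sqrt (a\<^sup>2 + b\<^sup>2) = 2 * R" using R0 by (simp only: real_sqrt_abs)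
  then have cr: "cos (sqrt (a\<^sup>2 + b\<^sup>2)) = 2 * (cos R)\<^sup>2 - 1" using cos_double_cos[of R] by simp
  have "(1 + cos a) * (1 + cos b) = 4 * (cos x * cos y)\<^sup>2"
    unfolding ca cb by (simp add: power_mult_distrib)
  moreover have "2 + 2 * cos (sqrt (a\<^sup>2 + b\<^sup>2)) = 4 * (cos R)\<^sup>2" unfolding cr by simp
  ultimately have "(1 + cos a) * (1 + cos b) > 2 + 2 * cos (sqrt (a\<^sup>2 + b\<^sup>2))"
    using sq by simp
  then show ?thesis by simp
qed

end
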